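(* Let $k\ge 3$, $\varepsilon\in[0,\tfrac12)$, let $b=(b_0,\dots,b_{k-1})$ be the counterclockwise vertices of a convex polygon (consecutive collinear vertices allowed), and let $b^+=\Phi_\varepsilon(b)$. For each $j\in\{0,\dots,k-1\}$ let $Q_j$ be the quadrilateral with corners $b_j, b_{j+1}, b^+_{j+1}, b^+_j$ in this cyclic order (indices mod $k$). Then no $Q_j$ is twisted (its boundary is not self-intersecting, i.e. the side $\overline{b_jb_{j+1}}$ does not cross the side $\overline{b^+_{j+1}b^+_j}$ and the side $\overline{b_{j+1}b^+_{j+1}}$ does not cross the side $\overline{b^+_jb_j}$ at a single interior point), and for $j\ne j'$ the quadrilaterals $Q_j$ and $Q_{j'}$ do not overlap (their interiors are disjoint).
   Context: The $\varepsilon$-GtM step is the map $\Phi_\varepsilon\colon(\mathbb{R}^2)^k\to(\mathbb{R}^2)^k$, $(b_0,\dots,b_{k-1})\mapsto(b_0^+,\dots,b_{k-1}^+)$ with $b_j^+=\varepsilon\frac{b_{j-1}+b_{j+1}}{2}+(1-\varepsilon)b_j$, indices modulo $k$. The quadrilaterals $Q_j$ are called wave-segments; together they partition the region between the polygon $b$ and the polygon $b^+$. *)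

theory Defs
  imports "HOL-Complex_Analysis.Complex_Analysis"
begin

text \<open>Points of the plane R^2 are represented as complex numbers.
  A polygon with k vertices is a function b :: nat => complex, of which only
  b 0, ..., b (k-1) matter; indices are taken modulo k.\<close>

definition cross2 :: "complex \<Rightarrow> complex \<Rightarrow> real" where
  "cross2 u v = Im (cnj u * v)"

definition vtx :: "nat \<Rightarrow> (nat \<Rightarrow> complex) \<Rightarrow> nat \<Rightarrow> complex" where
  "vtx k b j = b (j mod k)"

definition gtm_step :: "nat \<Rightarrow> real \<Rightarrow> (nat \<Rightarrow> complex) \<Rightarrow> nat \<Rightarrow> complex" where
  "gtm_step k eps b j =
     of_real eps * (vtx k b (j + k - 1) + vtx k b (j + 1)) / 2 + of_real (1 - eps) * vtx k b j"

text \<open>b_0,...,b_{k-1} are the counterclockwise vertices of a (nondegenerate) convex polygon,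
  consecutive collinear vertices allowed: the vertices are pairwise distinct, every vertex
  lies weakly to the left of every directed edge line b_i b_{i+1}, and not all vertices are
  collinear.\<close>
definition convex_ccw_polygon :: "nat \<Rightarrow> (nat \<Rightarrow> complex) \<Rightarrow> bool" where
  "convex_ccw_polygon k b \<longleftrightarrow>
     inj_on b {..<k} \<and>
     (\<forall>i<k. \<forall>j<k. cross2 (vtx k b (i + 1) - b i) (b j - b i) \<ge> 0) \<and>
     (\<exists>i<k. \<exists>j<k. cross2 (vtx k b (i + 1) - b i) (b j - b i) > 0)"

definition segments_cross :: "complex \<Rightarrow> complex \<Rightarrow> complex \<Rightarrow> complex \<Rightarrow> bool" where
  "segments_cross p q r s \<longleftrightarrow>
     (\<exists>x. closed_segment p q \<inter> closed_segment r s = {x} \<and>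
          x \<in> open_segment p q \<and> x \<in> open_segment r s)"

definition quad_twisted :: "complex \<Rightarrow> complex \<Rightarrow> complex \<Rightarrow> complex \<Rightarrow> bool" where
  "quad_twisted a b c d \<longleftrightarrow> segments_cross a b c d \<or> segments_cross b c d a"

definition quad_path :: "complex \<Rightarrow> complex \<Rightarrow> complex \<Rightarrow> complex \<Rightarrow> real \<Rightarrow> complex" where
  "quad_path a b c d = linepath a b +++ linepath b c +++ linepath c d +++ linepath d a"

definition quad_interior :: "complex \<Rightarrow> complex \<Rightarrow> complex \<Rightarrow> complex \<Rightarrow> complex set" where
  "quad_interior a b c d =
     {z. z \<notin> path_image (quad_path a b c d) \<and> winding_number (quad_path a b c d) z \<noteq> 0}"

definition wave_twisted :: "nat \<Rightarrow> real \<Rightarrow> (nat \<Rightarrow> complex) \<Rightarrow> nat \<Rightarrow> bool" where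
  "wave_twisted k eps b j =
     quad_twisted (vtx k b j) (vtx k b (j + 1))
       (vtx k (gtm_step k eps b) (j + 1)) (vtx k (gtm_step k eps b) j)"

definition wave_interior :: "nat \<Rightarrow> real \<Rightarrow> (nat \<Rightarrow> complex) \<Rightarrow> nat \<Rightarrow> complex set" where
  "wave_interior k eps b j =
     quad_interior (vtx k b j) (vtx k b (j + 1))
       (vtx k (gtm_step k eps b) (j + 1)) (vtx k (gtm_step k eps b) j)"

end

theory Submission
  imports Defs
begin

definition orient :: "complex \<Rightarrow> complex \<Rightarrow> complex \<Rightarrow> real" where
  "orient a b c = cross2 (b - a) (c - a)"

lemma cross2_alt: "cross2 u v = Re u * Im v - Im u * Re v"
  by (simp add: cross2_def)

lemma orient_alt: "orient a b c = (Re b - Re a) * (Im c - Im a) - (Im b - Im a) * (Re c - Re a)"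
  by (simp add: orient_def cross2_alt)

lemma orient_cyc: "orient a b c = orient b c a"
  by (simp add: orient_alt algebra_simps)

lemma orient_swap: "orient a c b = - orient a b c"
  by (simp add: orient_alt algebra_simps)

lemma orient_same1[simp]: "orient a a c = 0" and orient_same2[simp]: "orient a b a = 0"
  and orient_same3[simp]: "orient a b b = 0"
  by (simp_all add: orient_alt)

lemma orient_affine1:
  assumes "w1 + w2 = 1"
  shows "orient (of_real w1 * x + of_real w2 * y) q r = w1 * orient x q r + w2 * orient y q r"
proof -
  have "w2 = 1 - w1" using assms by simp
  then show ?thesis by (simp add: orient_alt algebra_simps; algebra)
qed

lemma line_all_zero:
  assumes "d \<noteq> 0" "cross2 d (x - p) = 0" "cross2 d (y - p) = 0" "cross2 d (z - p) = 0"
  shows "orient x y z = 0"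
proof -
  have "(Re d ^ 2 + Im d ^ 2) * orient x y z =
     (cross2 d (z - p) - cross2 d (x - p)) * (Re d * Re (y - x) + Im d * Im (y - x))
   - (cross2 d (y - p) - cross2 d (x - p)) * (Re d * Re (z - x) + Im d * Im (z - x))"
    by (simp add: orient_alt cross2_alt power2_eq_square; algebra)
  then have "(Re d ^ 2 + Im d ^ 2) * orient x y z = 0" using assms by simp
  moreover have "0 < Re d ^ 2 + Im d ^ 2"
    using assms(1) complex_neq_0 by blast
  ultimately show ?thesis by (metis mult_eq_0_iff less_irrefl)
qed

lemma cross2_zero_mult:
  assumes "u \<noteq> 0" "cross2 u v = 0"
  shows "\<exists>t. v = of_real t * u"
proof -
  have "Im (v / u) = 0"
    using assms by (simp add: Im_divide cross2_alt algebra_simps)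
  then have "v / u = of_real (Re (v / u))" by (simp add: complex_eq_iff)
  then have "v = of_real (Re (v / u)) * u" using assms(1) by (simp add: field_simps)
  then show ?thesis by blast
qed

lemma conv_inj: "convex_ccw_polygon k b \<Longrightarrow> inj_on b {..<k}"
  by (simp add: convex_ccw_polygon_def)

lemma conv_left: "convex_ccw_polygon k b \<Longrightarrow> i < k \<Longrightarrow> j < k \<Longrightarrow> 0 \<le> orient (b i) (vtx k b (i+1)) (b j)"
  by (simp add: convex_ccw_polygon_def orient_def)

lemma conv_nondeg: "convex_ccw_polygon k b \<Longrightarrow> \<exists>i<k. \<exists>j<k. 0 < orient (b i) (vtx k b (i+1)) (b j)"
  by (simp add: convex_ccw_polygon_def orient_def)

lemma vtx_lt: "i < k \<Longrightarrow> vtx k b i = b i"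
  by (simp add: vtx_def)

lemma collinear_contra:
  assumes conv: "convex_ccw_polygon k b" and d: "d \<noteq> 0"
    and all: "\<And>m. m < k \<Longrightarrow> cross2 d (b m - p) = 0"
  shows False
proof -
  obtain i j where ij: "i < k" "j < k" "0 < orient (b i) (vtx k b (i+1)) (b j)"
    using conv_nondeg[OF conv] by blast
  have "k > 0" using ij by simp
  have "(i+1) mod k < k" using \<open>k > 0\<close> by simp
  then have "orient (b i) (vtx k b (i+1)) (b j) = 0"
    unfolding vtx_def using all ij d by (intro line_all_zero[of d _ p]) auto
  then show False using ij by simp
qed

lemma real_trans:
  fixes a c a' c' a'' c'' :: real
  assumes "0 \<le> a" "0 \<le> c" "0 \<le> a'" "0 \<le> c'" "0 \<le> a''" "0 \<le> c''" "0 < a' + c'"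
    "0 \<le> a * c' - c * a'" "0 \<le> a' * c'' - c' * a''"
  shows "0 \<le> a * c'' - c * a''"
proof (cases "a' > 0")
  case True
  have "a' * (a * c'' - c * a'') = a * (a' * c'') - c * a' * a''" by (simp add: algebra_simps)
  also have "\<dots> \<ge> a * (c' * a'') - c * a' * a''"
    using assms by (simp add: mult_left_mono)
  also have "a * (c' * a'') - c * a' * a'' = a'' * (a * c' - c * a')" by (simp add: algebra_simps)
  finally have "a' * (a * c'' - c * a'') \<ge> a'' * (a * c' - c * a')" .
  moreover have "a'' * (a * c' - c * a') \<ge> 0" using assms by simp
  ultimately have "a' * (a * c'' - c * a'') \<ge> 0" by linarith
  then show ?thesis using True by (simp add: zero_le_mult_iff)
next
  case False
  then have "a' = 0" using assms by simp
  then have "c' > 0" using assms by simp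
  have "c' * a'' \<le> 0" using assms \<open>a' = 0\<close> by simp
  then have "a'' = 0" using \<open>c' > 0\<close> assms by (simp add: mult_le_0_iff)
  then show ?thesis using assms by simp
qed

lemma ang_pointed:
  assumes conv: "convex_ccw_polygon k b" and k3: "3 \<le> k"
    and D: "0 < cross2 (b 1 - b 0) (b (k-1) - b 0)"
    and mn: "m \<le> n" "n < k"
  shows "0 \<le> orient (b 0) (b m) (b n)"
proof (cases "m = 0")
  case True then show ?thesis by simp
next
  case False
  define f where "f x = b x - b 0" for x
  define A where "A x = cross2 (f x) (f (k-1))" for x
  define C where "C x = cross2 (f 1) (f x)" for x
  define DD where "DD = cross2 (f 1) (f (k-1))"
  have DD: "DD > 0" using D by (simp add: DD_def f_def)
  have A0: "0 \<le> A x" if "x < k" for x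
  proof -
    have "0 \<le> orient (b (k-1)) (vtx k b (k-1+1)) (b x)"
      using conv_left[OF conv, of "k-1" x] that k3 by simp
    moreover have "vtx k b (k-1+1) = b 0" using k3 by (simp add: vtx_def)
    ultimately show ?thesis by (simp add: A_def f_def orient_alt cross2_alt algebra_simps)
  qed
  have C0: "0 \<le> C x" if "x < k" for x
  proof -
    have "0 \<le> orient (b 0) (vtx k b (0+1)) (b x)"
      using conv_left[OF conv, of 0 x] that k3 by simp
    moreover have "vtx k b (0+1) = b 1" using k3 by (simp add: vtx_def)
    ultimately show ?thesis by (simp add: C_def f_def orient_def)
  qed
  have cons: "0 \<le> cross2 (f x) (f (Suc x))" if "Suc x < k" for x
  proof -
    have "0 \<le> orient (b x) (vtx k b (x+1)) (b 0)"
      using conv_left[OF conv, of x 0] that by simp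
    moreover have "vtx k b (x+1) = b (Suc x)" using that by (simp add: vtx_def)
    ultimately show ?thesis by (simp add: f_def orient_alt cross2_alt algebra_simps)
  qed
  have key: "DD * cross2 (f x) (f y) = A x * C y - C x * A y" for x y
    by (simp add: DD_def A_def C_def cross2_alt; algebra)
  have cramer: "of_real DD * f x = of_real (A x) * f 1 + of_real (C x) * f (k-1)" for x
    by (simp add: DD_def A_def C_def cross2_alt complex_eq_iff; algebra)
  have nz: "0 < A x + C x" if "1 \<le> x" "x < k" for x
  proof (rule ccontr)
    assume "\<not> 0 < A x + C x"
    moreover have "0 \<le> A x" "0 \<le> C x" using A0 C0 that by auto
    ultimately have "A x = 0" "C x = 0" by linarith+
    then have "of_real DD * f x = 0" using cramer by simp
    then have "b x = b 0" using DD by (simp add: f_def)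
    then have "x = 0" using conv_inj[OF conv] that inj_onD[of b "{..<k}" x 0] by simp
    then show False using that by simp
  qed
  have G: "0 \<le> A m * C n' - C m * A n'" if "m \<le> n'" "n' < k" for n'
    using that
  proof (induction n' rule: dec_induct)
    case base then show ?case by simp
  next
    case (step n')
    have "0 \<le> DD * cross2 (f n') (f (Suc n'))"
      using cons[of n'] step DD by simp
    then have g2: "0 \<le> A n' * C (Suc n') - C n' * A (Suc n')" by (simp add: key)
    show ?case
      by (rule real_trans[OF A0 C0 A0 C0 A0 C0 nz _ g2]) (use step False in auto)
  qed
  have "DD * orient (b 0) (b m) (b n) = A m * C n - C m * A n"
    by (simp add: orient_def key[symmetric] f_def)
  then have "0 \<le> DD * orient (b 0) (b m) (b n)" using G mn by simp
  then show ?thesis using DD by (simp add: zero_le_mult_iff)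
qed

lemma vtx_rot: "0 < k \<Longrightarrow> vtx k (\<lambda>i. vtx k b (i + s)) j = vtx k b (j + s)"
  by (simp add: vtx_def mod_add_left_eq)

lemma mod_shift_back:
  assumes "0 < (k::nat)" shows "(x + s + (k - s mod k)) mod k = x mod k"
proof -
  have "s mod k < k" using assms by simp
  moreover have "s div k * k + s mod k = s" by simp
  ultimately have "s + (k - s mod k) = s div k * k + k" by linarith
  then have eq: "s + (k - s mod k) = s div k * k + k" .
  have "x + s + (k - s mod k) = x + (s + (k - s mod k))" by simp
  also have "\<dots> = x + (s div k + 1) * k" by (subst eq) (simp add: algebra_simps)
  finally have "x + s + (k - s mod k) = x + (s div k + 1) * k" .
  then show ?thesis by (simp only: mod_mult_self1)
qed

lemma vtx_shift1: "vtx k b (i + 1 + s) = vtx k b ((i + s) mod k + 1)"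
proof -
  have "((i + s) mod k + 1) mod k = (i + s + 1) mod k" by (rule mod_add_left_eq)
  moreover have "i + 1 + s = i + s + 1" by simp
  ultimately show ?thesis unfolding vtx_def by simp
qed

lemma conv_rot:
  assumes conv: "convex_ccw_polygon k b" and k: "0 < k"
  shows "convex_ccw_polygon k (\<lambda>i. vtx k b (i + s))"
proof -
  let ?b = "\<lambda>i. vtx k b (i + s)"
  have inj: "inj_on ?b {..<k}"
  proof (rule inj_onI)
    fix x y assume xy: "x \<in> {..<k}" "y \<in> {..<k}" "?b x = ?b y"
    then have "b ((x + s) mod k) = b ((y + s) mod k)" by (simp add: vtx_def)
    then have "(x + s) mod k = (y + s) mod k"
      using conv_inj[OF conv] k by (auto dest: inj_onD)
    then have "((x + s) mod k + (k - s mod k)) mod k = ((y + s) mod k + (k - s mod k)) mod k"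
      by simp
    then have "(x + s + (k - s mod k)) mod k = (y + s + (k - s mod k)) mod k"
      by (simp add: mod_add_left_eq)
    then have "x mod k = y mod k" using mod_shift_back[OF k] by simp
    then show "x = y" using xy by simp
  qed
  have left: "0 \<le> orient (?b i) (vtx k ?b (i+1)) (?b j)" if "i < k" "j < k" for i j
  proof -
    have "vtx k ?b (i+1) = vtx k b (i + 1 + s)" using k by (rule vtx_rot)
    also have "\<dots> = vtx k b ((i + s) mod k + 1)" by (rule vtx_shift1)
    finally have "vtx k ?b (i+1) = vtx k b ((i + s) mod k + 1)" .
    moreover have "?b i = b ((i+s) mod k)" "?b j = b ((j+s) mod k)" by (simp_all add: vtx_def)
    ultimately show ?thesis using conv_left[OF conv, of "(i+s) mod k" "(j+s) mod k"] k by simp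
  qed
  have nondeg: "\<exists>i<k. \<exists>j<k. 0 < orient (?b i) (vtx k ?b (i+1)) (?b j)"
  proof -
    obtain i0 j0 where ij: "i0 < k" "j0 < k" "0 < orient (b i0) (vtx k b (i0+1)) (b j0)"
      using conv_nondeg[OF conv] by blast
    define i where "i = (i0 + (k - s mod k)) mod k"
    define j where "j = (j0 + (k - s mod k)) mod k"
    have ii: "(i + s) mod k = i0"
    proof -
      have "(i + s) mod k = (i0 + (k - s mod k) + s) mod k" by (simp add: i_def mod_add_left_eq)
      also have "\<dots> = (i0 + (k - s mod k) + s mod k) mod k" by (simp add: mod_add_right_eq)
      also have "i0 + (k - s mod k) + s mod k = i0 + k"
      proof -
        have "k - s mod k + s mod k = k" using mod_less_divisor[OF k, of s] by (simp add: less_imp_le)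
        then show ?thesis by (simp only: add.assoc)
      qed
      finally show ?thesis using ij by simp
    qed
    have jj: "(j + s) mod k = j0"
    proof -
      have "(j + s) mod k = (j0 + (k - s mod k) + s) mod k" by (simp add: j_def mod_add_left_eq)
      also have "\<dots> = (j0 + (k - s mod k) + s mod k) mod k" by (simp add: mod_add_right_eq)
      also have "j0 + (k - s mod k) + s mod k = j0 + k"
      proof -
        have "k - s mod k + s mod k = k" using mod_less_divisor[OF k, of s] by (simp add: less_imp_le)
        then show ?thesis by (simp only: add.assoc)
      qed
      finally show ?thesis using ij by simp
    qed
    have "vtx k ?b (i+1) = vtx k b (i + 1 + s)" using k by (rule vtx_rot)
    also have "\<dots> = vtx k b ((i + s) mod k + 1)" by (rule vtx_shift1)
    finally have "vtx k ?b (i+1) = vtx k b (i0 + 1)" using ii by simp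
    moreover have "?b i = b i0" "?b j = b j0" using ii jj by (simp_all add: vtx_def)
    moreover have "i < k" "j < k" using k by (simp_all add: i_def j_def)
    ultimately show ?thesis using ij by metis
  qed
  show ?thesis unfolding convex_ccw_polygon_def orient_def[symmetric]
    using inj left nondeg by blast
qed

lemma ang0:
  assumes conv: "convex_ccw_polygon k b" and k3: "3 \<le> k"
    and IH: "\<And>k' b' p q r. k' < k \<Longrightarrow> convex_ccw_polygon k' b' \<Longrightarrow> 3 \<le> k' \<Longrightarrow> p \<le> q \<Longrightarrow> q \<le> r \<Longrightarrow> r < k'
              \<Longrightarrow> 0 \<le> orient (b' p) (b' q) (b' r)"
    and mn: "m \<le> n" "n < k"
  shows "0 \<le> orient (b 0) (b m) (b n)"
proof -
  define f where "f x = b x - b 0" for x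
  have C0: "0 \<le> cross2 (f 1) (f x)" if "x < k" for x
  proof -
    have "0 \<le> orient (b 0) (vtx k b (0+1)) (b x)"
      using conv_left[OF conv, of 0 x] that k3 by simp
    moreover have "vtx k b (0+1) = b 1" using k3 by (simp add: vtx_def)
    ultimately show ?thesis by (simp add: f_def orient_def)
  qed
  have A0: "0 \<le> cross2 (f x) (f (k-1))" if "x < k" for x
  proof -
    have "0 \<le> orient (b (k-1)) (vtx k b (k-1+1)) (b x)"
      using conv_left[OF conv, of "k-1" x] that k3 by simp
    moreover have "vtx k b (k-1+1) = b 0" using k3 by (simp add: vtx_def)
    ultimately show ?thesis by (simp add: f_def orient_alt cross2_alt algebra_simps)
  qed
  have inj: "\<And>x y. x < k \<Longrightarrow> y < k \<Longrightarrow> b x = b y \<Longrightarrow> x = y"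
    using conv_inj[OF conv] by (auto dest: inj_onD)
  have f1: "f 1 \<noteq> 0" using inj[of 1 0] k3 by (auto simp: f_def)
  have fk: "f (k-1) \<noteq> 0" using inj[of "k-1" 0] k3 by (auto simp: f_def)
  show ?thesis
  proof (cases "0 < cross2 (f 1) (f (k-1))")
    case True
    then show ?thesis using ang_pointed[OF conv k3 _ mn] by (simp add: f_def)
  next
    case False
    then have D0: "cross2 (f 1) (f (k-1)) = 0" using C0[of "k-1"] k3 by simp
    obtain t where t: "f (k-1) = of_real t * f 1" using cross2_zero_mult[OF f1 D0] by blast
    have "t < 0"
    proof (rule ccontr)
      assume "\<not> t < 0"
      then have "t > 0" using t fk by (cases "t = 0") auto
      have "cross2 (f 1) (b x - b 0) = 0" if "x < k" for x
      proof -
        have "0 \<le> cross2 (f x) (f (k-1))" using A0 that by simp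
        also have "cross2 (f x) (f (k-1)) = cross2 (f x) (of_real t * f 1)" by (simp only: t)
        also have "\<dots> = - t * cross2 (f 1) (f x)"
          by (simp add: cross2_alt algebra_simps)
        finally have "cross2 (f 1) (f x) \<le> 0" using \<open>t > 0\<close>
          by (simp add: mult_le_0_iff)
        then show ?thesis using C0[OF that] by (simp add: f_def)
      qed
      then show False using collinear_contra[OF conv f1] by blast
    qed
    define s where "s = - t"
    have s: "s > 0" using \<open>t < 0\<close> by (simp add: s_def)
    have bk: "b (k-1) = b 0 - of_real s * (b 1 - b 0)" using t by (simp add: s_def f_def algebra_simps)
    define w1 where "w1 = 1 / (1 + s)"
    define w2 where "w2 = s / (1 + s)"
    have w12: "w1 + w2 = 1" using s by (simp add: w1_def w2_def field_simps)
    have b0: "b 0 = of_real w1 * b (k-1) + of_real w2 * b 1"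
    proof -
      have nz: "1 + complex_of_real s \<noteq> 0" using s by (simp add: complex_eq_iff)
      have h: "(1 + complex_of_real s) * b 0 = b (k-1) + of_real s * b 1" unfolding bk by (simp add: algebra_simps)
      have w2s: "w2 = w1 * s" by (simp add: w1_def w2_def)
      have w1s: "w1 * (1 + s) = 1" using s by (simp add: w1_def)
      have "of_real w1 * b (k-1) + of_real w2 * b 1 = of_real w1 * (b (k-1) + of_real s * b 1)"
        by (simp add: w2s algebra_simps)
      also have "\<dots> = of_real w1 * ((1 + of_real s) * b 0)" using h by simp
      also have "\<dots> = of_real (w1 * (1 + s)) * b 0" by (simp add: algebra_simps)
      also have "\<dots> = b 0" using w1s by simp
      finally show ?thesis by simp
    qed
    show ?thesis
    proof (cases "k = 3")
      case True
      have "cross2 (f 1) (b x - b 0) = 0" if "x < k" for x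
      proof -
        have "x = 0 \<or> x = 1 \<or> x = 2" using that True by auto
        moreover have "cross2 (f 1) (f 2) = 0" using D0 True by simp
        ultimately show ?thesis by (auto simp: f_def cross2_alt)
      qed
      then show ?thesis using collinear_contra[OF conv f1] by blast
    next
      case False
      then have k4: "4 \<le> k" using k3 by simp
      define b' where "b' i = b (Suc i)" for i
      have conv': "convex_ccw_polygon (k-1) b'"
      proof -
        have inj': "inj_on b' {..<k-1}"
        proof (rule inj_onI)
          fix x y assume xy: "x \<in> {..<k-1}" "y \<in> {..<k-1}" "b' x = b' y"
          then have "Suc x = Suc y" using inj[of "Suc x" "Suc y"] by (auto simp: b'_def)
          then show "x = y" by simp
        qed
        have left': "0 \<le> orient (b' i) (vtx (k-1) b' (i+1)) (b' j)" if "i < k-1" "j < k-1" for i j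
        proof (cases "i + 1 < k - 1")
          case True
          then have "vtx (k-1) b' (i+1) = vtx k b (Suc i + 1)" by (simp add: vtx_def b'_def)
          then show ?thesis using conv_left[OF conv, of "Suc i" "Suc j"] that by (simp add: b'_def)
        next
          case False
          then have ii: "i = k - 2" using that by simp
          have e: "i + 1 = k - 1" using ii k4 by simp
          have "vtx (k-1) b' (i+1) = b 1" unfolding e by (simp add: vtx_def b'_def)
          moreover have "b' i = b (k-1)" using ii k4 by (simp add: b'_def Suc_diff_Suc numeral_2_eq_2)
          moreover have "orient (b (k-1)) (b 1) x = (1 + s) * orient (b 0) (b 1) x" for x
            unfolding bk by (simp add: orient_alt algebra_simps)
          moreover have "0 \<le> orient (b 0) (b 1) (b' j)"
            using conv_left[OF conv, of 0 "Suc j"] that k4 by (simp add: vtx_def b'_def)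
          ultimately show ?thesis using s by simp
        qed
        have nondeg': "\<exists>i<k-1. \<exists>j<k-1. 0 < orient (b' i) (vtx (k-1) b' (i+1)) (b' j)"
        proof (rule ccontr)
          assume nd: "\<not> ?thesis"
          define d where "d = b 2 - b 1"
          have d: "d \<noteq> 0" using inj[of 2 1] k4 by (auto simp: d_def)
          have on: "cross2 d (b x - b 1) = 0" if "x < k" for x
          proof (cases "x = 0")
            case False
            then obtain j where j: "x = Suc j" by (cases x) auto
            have "\<not> 0 < orient (b' 0) (vtx (k-1) b' (0+1)) (b' j)" using nd j that k4 by auto
            moreover have "0 \<le> orient (b' 0) (vtx (k-1) b' (0+1)) (b' j)" using left' j that k4 by auto
            moreover have "vtx (k-1) b' (0+1) = b 2"
            proof -
              have "(0+1) mod (k-1) = (1::nat)" using k4 by simp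
              then have "vtx (k-1) b' (0+1) = b' 1" unfolding vtx_def by metis
              then show ?thesis by (simp add: b'_def numeral_2_eq_2)
            qed
            ultimately show ?thesis using j by (simp add: b'_def orient_def d_def numeral_2_eq_2)
          next
            case True
            have h1: "cross2 d (b (k-1) - b 1) = 0"
            proof -
              have "\<not> 0 < orient (b' 0) (vtx (k-1) b' (0+1)) (b' (k-2))" using nd k4 by auto
              moreover have "0 \<le> orient (b' 0) (vtx (k-1) b' (0+1)) (b' (k-2))" using left' k4 by auto
              moreover have "vtx (k-1) b' (0+1) = b 2"
            proof -
              have "(0+1) mod (k-1) = (1::nat)" using k4 by simp
              then have "vtx (k-1) b' (0+1) = b' 1" unfolding vtx_def by metis
              then show ?thesis by (simp add: b'_def numeral_2_eq_2)
            qed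
              moreover have "b' (k-2) = b (k-1)" using k4 by (simp add: b'_def Suc_diff_Suc numeral_2_eq_2)
              ultimately show ?thesis by (simp add: b'_def orient_def d_def numeral_2_eq_2)
            qed
            have "cross2 d (b 0 - b 1) = w1 * cross2 d (b (k-1) - b 1)"
            proof -
              have w2: "w2 = 1 - w1" using w12 by simp
              have "b 0 - b 1 = of_real w1 * b (k-1) + of_real (1 - w1) * b 1 - b 1"
                by (subst b0) (simp only: w2)
              also have "\<dots> = of_real w1 * (b (k-1) - b 1)" by (simp add: algebra_simps)
              finally have bb: "b 0 - b 1 = of_real w1 * (b (k-1) - b 1)" .
              have "cross2 d (b 0 - b 1) = cross2 d (of_real w1 * (b (k-1) - b 1))" by (simp only: bb)
              also have "\<dots> = w1 * cross2 d (b (k-1) - b 1)" by (simp add: cross2_alt algebra_simps)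
              finally show ?thesis .
            qed
            then show ?thesis using h1 True by simp
          qed
          show False using collinear_contra[OF conv d on] by blast
        qed
        show ?thesis unfolding convex_ccw_polygon_def orient_def[symmetric]
          using inj' left' nondeg' by blast
      qed
      show ?thesis
      proof (cases "m = 0")
        case True then show ?thesis by simp
      next
        case False
        have o1: "0 \<le> orient (b 1) (b m) (b n)"
        proof -
          have "0 \<le> orient (b' 0) (b' (m-1)) (b' (n-1))"
            using IH[of "k-1" b' 0 "m-1" "n-1"] conv' k4 mn False by simp
          then show ?thesis using False mn by (simp add: b'_def)
        qed
        have o2: "0 \<le> orient (b (k-1)) (b m) (b n)"
        proof -
          have "0 \<le> orient (b' (m-1)) (b' (n-1)) (b' (k-2))"
            using IH[of "k-1" b' "m-1" "n-1" "k-2"] conv' k4 mn False by simp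
          moreover have "b' (k-2) = b (k-1)" using k4 by (simp add: b'_def Suc_diff_Suc numeral_2_eq_2)
          moreover have "orient (b (k-1)) (b m) (b n) = orient (b m) (b n) (b (k-1))" by (rule orient_cyc)
          ultimately show ?thesis using False mn by (simp add: b'_def)
        qed
        have "orient (b 0) (b m) (b n) = w1 * orient (b (k-1)) (b m) (b n) + w2 * orient (b 1) (b m) (b n)"
          by (subst b0) (rule orient_affine1[OF w12])
        moreover have "w1 \<ge> 0" "w2 \<ge> 0" using s by (simp_all add: w1_def w2_def)
        ultimately show ?thesis using o1 o2 by simp
      qed
    qed
  qed
qed

lemma ang:
  "convex_ccw_polygon k b \<Longrightarrow> 3 \<le> k \<Longrightarrow> p \<le> q \<Longrightarrow> q \<le> r \<Longrightarrow> r < k \<Longrightarrow> 0 \<le> orient (b p) (b q) (b r)"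
proof (induction k arbitrary: b p q r rule: less_induct)
  case (less k)
  let ?b = "\<lambda>i. vtx k b (i + p)"
  have conv': "convex_ccw_polygon k ?b" using conv_rot less.prems by simp
  have "0 \<le> orient (?b 0) (?b (q - p)) (?b (r - p))"
    by (rule ang0[OF conv' less.prems(2)]) (use less.IH less.prems in auto)
  then show ?case using less.prems by (simp add: vtx_def)
qed

definition sm :: "real \<Rightarrow> complex \<Rightarrow> complex \<Rightarrow> complex \<Rightarrow> complex" where
  "sm e x y z = of_real e * (x + z) / 2 + of_real (1 - e) * y"

lemma orient_sm3:
  "orient a b (sm e y0 y1 y2) = e/2 * orient a b y0 + (1 - e) * orient a b y1 + e/2 * orient a b y2"
  by (simp add: sm_def orient_alt field_simps; algebra)

lemma L5_ident:
  fixes x0 x1 x2 x3 x4 :: complex and e :: real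
  shows "orient (sm e x0 x1 x2) (sm e x1 x2 x3) (sm e x2 x3 x4) = e^3/8 * orient x0 x1 x2 + (e^2/4 - e^3/4) * orient x0 x1 x3
     + e^3/8 * orient x0 x1 x4 + (e/2 - e^2 + 3*e^3/8) * orient x0 x2 x3
     + (e^2/4 - e^3/4) * orient x0 x2 x4 + e^3/8 * orient x0 x3 x4
     + (1 - 3*e + 5/2*e^2 - e^3/2) * orient x1 x2 x3 + (e/2 - e^2 + 3*e^3/8) * orient x1 x2 x4
     + (e^2/4 - e^3/4) * orient x1 x3 x4 + e^3/8 * orient x2 x3 x4"
  unfolding sm_def orient_alt
  by (simp add: field_simps power2_eq_square power3_eq_cube; algebra)

lemma L5:
  fixes x0 x1 x2 x3 x4 :: complex and e :: real
  assumes e: "0 \<le> e" "e \<le> 1/2"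
    and o: "0 \<le> orient x0 x1 x2" "0 \<le> orient x0 x1 x3" "0 \<le> orient x0 x1 x4" "0 \<le> orient x0 x2 x3"
       "0 \<le> orient x0 x2 x4" "0 \<le> orient x0 x3 x4" "0 \<le> orient x1 x2 x3" "0 \<le> orient x1 x2 x4"
       "0 \<le> orient x1 x3 x4" "0 \<le> orient x2 x3 x4"
  shows "0 \<le> orient (sm e x0 x1 x2) (sm e x1 x2 x3) (sm e x2 x3 x4)"
proof -
  have c1: "0 \<le> e^3/8" using e by simp
  have c2: "0 \<le> e^2/4 - e^3/4"
  proof -
    have "e^2/4 - e^3/4 = e^2 * (1 - e) / 4" by (simp add: power2_eq_square power3_eq_cube algebra_simps)
    moreover have "0 \<le> e^2 * (1 - e) / 4" using e by simp
    ultimately show ?thesis by linarith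
  qed
  have c3: "0 \<le> e/2 - e^2 + 3*e^3/8"
  proof -
    have "e/2 - e^2 + 3*e^3/8 = e * ((1/2 - e) + 3*e^2/8)"
      by (simp add: power2_eq_square power3_eq_cube algebra_simps)
    moreover have "0 \<le> (1/2 - e) + 3*e^2/8" using e by simp
    ultimately show ?thesis using e by simp
  qed
  have c4: "0 \<le> 1 - 3*e + 5/2*e^2 - e^3/2"
  proof -
    have "1 - 3*e + 5/2*e^2 - e^3/2 = (1 - e) * ((1 - e)^2 - e^2/2)"
      by (simp add: power2_eq_square power3_eq_cube field_simps; algebra)
    moreover have "e^2/2 \<le> (1 - e)^2"
    proof -
      have "e^2 \<le> (1 - e)^2" using e by (intro power_mono) auto
      then show ?thesis using zero_le_power2[of e] by linarith
    qed
    ultimately show ?thesis using e by simp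
  qed
  show ?thesis unfolding L5_ident
    using mult_nonneg_nonneg[OF c1 o(1)] mult_nonneg_nonneg[OF c2 o(2)] mult_nonneg_nonneg[OF c1 o(3)] mult_nonneg_nonneg[OF c3 o(4)] mult_nonneg_nonneg[OF c2 o(5)] mult_nonneg_nonneg[OF c1 o(6)] mult_nonneg_nonneg[OF c4 o(7)] mult_nonneg_nonneg[OF c3 o(8)] mult_nonneg_nonneg[OF c2 o(9)] mult_nonneg_nonneg[OF c1 o(10)] by linarith
qed

lemma Lfar:
  fixes x0 x1 x2 x3 y :: complex and e :: real
  assumes e: "0 \<le> e" "e \<le> 1/2"
    and o: "0 \<le> orient x0 x1 y" "0 \<le> orient x0 x2 y" "0 \<le> orient x0 x3 y"
       "0 \<le> orient x1 x2 y" "0 \<le> orient x1 x3 y" "0 \<le> orient x2 x3 y"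
  shows "0 \<le> orient (sm e x0 x1 x2) (sm e x1 x2 x3) y"
proof -
  have id: "orient (sm e x0 x1 x2) (sm e x1 x2 x3) y =
      ((1 - e)^2 - e^2/4) * orient x1 x2 y + e^2/4 * orient x0 x1 y + e/2 * (1 - e) * orient x0 x2 y
      + e^2/4 * orient x0 x3 y + (1 - e) * e/2 * orient x1 x3 y + e^2/4 * orient x2 x3 y"
    unfolding sm_def orient_alt
    by (simp add: field_simps power2_eq_square; algebra)
  have "e^2/4 \<le> (1 - e)^2"
  proof -
    have "e^2 \<le> (1 - e)^2" using e by (intro power_mono) auto
    then show ?thesis using zero_le_power2[of e] by linarith
  qed
  then have c0: "0 \<le> (1 - e)^2 - e^2/4" by simp
  have c1: "0 \<le> e^2/4" by simp
  have c2: "0 \<le> e/2 * (1 - e)" "0 \<le> (1 - e) * e/2" using e by simp_all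
  show ?thesis unfolding id
    using mult_nonneg_nonneg[OF c0 o(4)] mult_nonneg_nonneg[OF c1 o(1)] mult_nonneg_nonneg[OF c2(1) o(2)]
      mult_nonneg_nonneg[OF c1 o(3)] mult_nonneg_nonneg[OF c2(2) o(5)] mult_nonneg_nonneg[OF c1 o(6)] by linarith
qed

lemma Lquad:
  fixes x0 x1 x2 x3 :: complex and e :: real
  assumes e: "0 \<le> e" "e \<le> 1/2"
    and o: "0 \<le> orient x0 x1 x2" "0 \<le> orient x0 x1 x3" "0 \<le> orient x0 x2 x3" "0 \<le> orient x1 x2 x3"
  defines "M \<equiv> (x1 + x2) / 2"
  shows "0 \<le> orient M x2 (sm e x1 x2 x3)" "0 \<le> orient M (sm e x1 x2 x3) (sm e x0 x1 x2)"
    "0 \<le> orient M (sm e x0 x1 x2) x1" "orient M x1 x2 = 0"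
    "0 \<le> orient x1 x2 (sm e x1 x2 x3)" "0 \<le> orient x1 x2 (sm e x0 x1 x2)"
proof -
  have "orient M x2 (sm e x1 x2 x3) = e/4 * orient x1 x2 x3"
    unfolding M_def sm_def orient_alt by (simp add: field_simps; algebra)
  moreover have "0 \<le> e/4 * orient x1 x2 x3" using o e by simp
  ultimately show "0 \<le> orient M x2 (sm e x1 x2 x3)" by linarith
  have "orient M (sm e x1 x2 x3) (sm e x0 x1 x2) = (e/4 - 3*e^2/8) * orient x0 x1 x2
     + e^2/8 * orient x0 x1 x3 + e^2/8 * orient x0 x2 x3 + (e/4 - 3*e^2/8) * orient x1 x2 x3"
    unfolding M_def sm_def orient_alt by (simp add: field_simps power2_eq_square; algebra)
  moreover have "0 \<le> e/4 - 3*e^2/8"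
  proof -
    have "e/4 - 3*e^2/8 = e * (1/4 - 3*e/8)" by (simp add: power2_eq_square algebra_simps)
    then show ?thesis using e by simp
  qed
  ultimately show "0 \<le> orient M (sm e x1 x2 x3) (sm e x0 x1 x2)"
    using o e by (simp add: add_nonneg_nonneg mult_nonneg_nonneg)
  have "orient M (sm e x0 x1 x2) x1 = e/4 * orient x0 x1 x2"
    unfolding M_def sm_def orient_alt by (simp add: field_simps; algebra)
  moreover have "0 \<le> e/4 * orient x0 x1 x2" using o e by simp
  ultimately show "0 \<le> orient M (sm e x0 x1 x2) x1" by linarith
  show "orient M x1 x2 = 0"
    unfolding M_def orient_alt by (simp add: field_simps; algebra)
  have "orient x1 x2 (sm e x1 x2 x3) = e/2 * orient x1 x2 x3"
    unfolding sm_def orient_alt by (simp add: field_simps; algebra)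
  moreover have "0 \<le> e/2 * orient x1 x2 x3" using o e by simp
  ultimately show "0 \<le> orient x1 x2 (sm e x1 x2 x3)" by linarith
  have "orient x1 x2 (sm e x0 x1 x2) = e/2 * orient x0 x1 x2"
    unfolding sm_def orient_alt by (simp add: field_simps; algebra)
  moreover have "0 \<le> e/2 * orient x0 x1 x2" using o e by simp
  ultimately show "0 \<le> orient x1 x2 (sm e x0 x1 x2)" by linarith
qed

lemma L3:
  fixes x0 x1 x2 :: complex and e :: real
  shows "orient (sm e x2 x0 x1) (sm e x0 x1 x2) (sm e x1 x2 x0) = (1 - 3*e/2)^2 * orient x0 x1 x2"
  unfolding sm_def orient_alt by (simp add: field_simps power2_eq_square; algebra)

lemma vtx_add_k: "vtx k b (i + k) = vtx k b i"
  by (simp add: vtx_def)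

lemma vtx_minus_k: "k \<le> x \<Longrightarrow> vtx k b x = vtx k b (x - k)"
  by (metis le_add_diff_inverse2 vtx_add_k)

lemma vtx_mod_add: "vtx k b (i mod k + m) = vtx k b (i + m)"
  by (simp add: vtx_def mod_add_left_eq)

lemma C_sm:
  assumes "0 < k"
  shows "vtx k (gtm_step k eps b) i = sm eps (vtx k b (i + k - 1)) (vtx k b (i + k)) (vtx k b (i + k + 1))"
proof -
  have "vtx k (gtm_step k eps b) i = gtm_step k eps b (i mod k)" by (simp add: vtx_def)
  also have "\<dots> = sm eps (vtx k b (i mod k + (k - 1))) (vtx k b (i mod k + 0)) (vtx k b (i mod k + 1))"
    using assms by (simp add: gtm_step_def sm_def)
  also have "\<dots> = sm eps (vtx k b (i + (k - 1))) (vtx k b (i + 0)) (vtx k b (i + 1))"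
    by (simp only: vtx_mod_add)
  also have "\<dots> = sm eps (vtx k b (i + k - 1)) (vtx k b (i + k)) (vtx k b (i + k + 1))"
  proof -
    have "i + (k - 1) = i + k - 1" using assms by simp
    moreover have "vtx k b (i + 0) = vtx k b (i + k)" using vtx_add_k[of k b i] by simp
    moreover have "vtx k b (i + 1) = vtx k b (i + k + 1)"
      using vtx_add_k[of k b "i+1"] by (simp add: add.commute add.left_commute)
    ultimately show ?thesis by simp
  qed
  finally show ?thesis .
qed

lemma angS:
  assumes conv: "convex_ccw_polygon k b" and k3: "3 \<le> k"
    and pqr: "p \<le> q" "q \<le> r" "r \<le> p + k"
  shows "0 \<le> orient (vtx k b p) (vtx k b q) (vtx k b r)"
proof -
  define d where "d = p div k * k"
  define p0 where "p0 = p mod k"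
  have pd: "p = p0 + d" by (simp add: p0_def d_def)
  have p0k: "p0 < k" using k3 by (simp add: p0_def)
  define q' where "q' = q - d"
  define r' where "r' = r - d"
  have qd: "q = q' + d" "r = r' + d" using pqr pd by (simp_all add: q'_def r'_def)
  have vd: "vtx k b (x + d) = vtx k b x" for x
    by (simp add: vtx_def d_def)
  have v: "vtx k b p = b p0" "vtx k b q = vtx k b q'" "vtx k b r = vtx k b r'"
    using pd qd vd p0k by (simp_all add: vtx_def)
  have ord: "p0 \<le> q'" "q' \<le> r'" "r' \<le> p0 + k" using pqr pd qd by simp_all
  have B: "\<And>x. x < k \<Longrightarrow> vtx k b x = b x" by (simp add: vtx_def)
  show ?thesis
  proof (cases "r' < k")
    case True
    then show ?thesis using ang[OF conv k3 ord(1) ord(2) True] v B ord by simp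
  next
    case rk: False
    show ?thesis
    proof (cases "q' < k")
      case True
      have "0 \<le> orient (b (r' - k)) (b p0) (b q')"
        using ang[OF conv k3, of "r' - k" p0 q'] ord True by simp
      moreover have "vtx k b r' = b (r' - k)" using rk ord p0k by (simp add: vtx_minus_k B)
      moreover have "orient (b p0) (b q') (b (r' - k)) = orient (b (r' - k)) (b p0) (b q')"
        by (metis orient_cyc)
      ultimately show ?thesis using v B True by simp
    next
      case False
      have "0 \<le> orient (b (q' - k)) (b (r' - k)) (b p0)"
        using ang[OF conv k3, of "q' - k" "r' - k" p0] ord False p0k by simp
      moreover have "vtx k b r' = b (r' - k)" using rk ord p0k by (simp add: vtx_minus_k B)
      moreover have "vtx k b q' = b (q' - k)" using False ord p0k by (simp add: vtx_minus_k B)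
      moreover have "orient (b p0) (b (q' - k)) (b (r' - k)) = orient (b (q' - k)) (b (r' - k)) (b p0)"
        by (metis orient_cyc)
      ultimately show ?thesis using v by simp
    qed
  qed
qed

lemma C_loc:
  assumes conv: "convex_ccw_polygon k b" and k4: "4 \<le> k" and e: "0 \<le> eps" "eps \<le> 1/2"
  shows "0 \<le> orient (vtx k (gtm_step k eps b) j) (vtx k (gtm_step k eps b) (j+1)) (vtx k (gtm_step k eps b) (j+2))"
proof -
  have k0: "0 < k" "3 \<le> k" using k4 by simp_all
  define x where "x m = vtx k b (j + k - 1 + m)" for m
  have c: "vtx k (gtm_step k eps b) (j + t) = sm eps (x t) (x (t+1)) (x (t+2))" for t
    using C_sm[OF k0(1), of eps b "j+t"] k0 by (simp add: x_def add.commute add.left_commute)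
  have o: "0 \<le> orient (x p) (x q) (x r)" if "p \<le> q" "q \<le> r" "r \<le> 4" for p q r
    unfolding x_def using that k4 by (intro angS[OF conv k0(2)]) auto
  have "0 \<le> orient (sm eps (x 0) (x 1) (x 2)) (sm eps (x 1) (x 2) (x 3)) (sm eps (x 2) (x 3) (x 4))"
    by (rule L5[OF e]) (rule o; simp)+
  then show ?thesis using c[of 0] c[of 1] c[of 2] by (simp add: numeral_eq_Suc)
qed

lemma C_far:
  assumes conv: "convex_ccw_polygon k b" and k3: "3 \<le> k" and e: "0 \<le> eps" "eps \<le> 1/2"
    and i: "2 \<le> i" "i + 3 \<le> k"
  shows "0 \<le> orient (vtx k (gtm_step k eps b) i) (vtx k (gtm_step k eps b) (i+1)) (vtx k (gtm_step k eps b) 0)"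
proof -
  have k0: "0 < k" using k3 by simp
  define x where "x m = vtx k b (i - 1 + m)" for m
  have c: "vtx k (gtm_step k eps b) (i + t) = sm eps (x t) (x (t+1)) (x (t+2))" for t
  proof -
    have "vtx k b (i + t + k - 1) = vtx k b (i - 1 + t)"
      using vtx_add_k[of k b "i - 1 + t"] i by (simp add: add.commute add.left_commute)
    moreover have "vtx k b (i + t + k) = vtx k b (i - 1 + (t + 1))"
      using vtx_add_k[of k b "i - 1 + (t+1)"] i by (simp add: add.commute add.left_commute)
    moreover have "vtx k b (i + t + k + 1) = vtx k b (i - 1 + (t + 2))"
      using vtx_add_k[of k b "i - 1 + (t+2)"] i by (simp add: add.commute add.left_commute)
    ultimately show ?thesis using C_sm[OF k0, of eps b "i+t"] by (simp add: x_def)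
  qed
  have c0: "vtx k (gtm_step k eps b) 0 = sm eps (vtx k b (k - 1)) (vtx k b k) (vtx k b (k + 1))"
    using C_sm[OF k0, of eps b 0] by simp
  have o: "0 \<le> orient (x p) (x q) (vtx k b (k - 1 + r))" if "p < q" "q \<le> 3" "r \<le> 2" for p q r
    unfolding x_def using that i by (intro angS[OF conv k3]) auto
  have f: "0 \<le> orient (sm eps (x 0) (x 1) (x 2)) (sm eps (x 1) (x 2) (x 3)) (vtx k b (k - 1 + r))"
    if "r \<le> 2" for r
    by (rule Lfar[OF e]) (rule o; use that in simp)+
  have "orient (sm eps (x 0) (x 1) (x 2)) (sm eps (x 1) (x 2) (x 3)) (vtx k (gtm_step k eps b) 0)
     = eps/2 * orient (sm eps (x 0) (x 1) (x 2)) (sm eps (x 1) (x 2) (x 3)) (vtx k b (k - 1 + 0))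
       + (1 - eps) * orient (sm eps (x 0) (x 1) (x 2)) (sm eps (x 1) (x 2) (x 3)) (vtx k b (k - 1 + 1))
       + eps/2 * orient (sm eps (x 0) (x 1) (x 2)) (sm eps (x 1) (x 2) (x 3)) (vtx k b (k - 1 + 2))"
    using k0 by (simp add: c0 orient_sm3)
  moreover have "0 \<le> \<dots>"
    using f[of 0] f[of 1] f[of 2] e by (intro add_nonneg_nonneg mult_nonneg_nonneg) auto
  ultimately show ?thesis using c[of 0] c[of 1] by (simp add: numeral_eq_Suc)
qed

lemma C_fan:
  assumes conv: "convex_ccw_polygon k b" and k3: "3 \<le> k" and e: "0 \<le> eps" "eps \<le> 1/2"
    and i: "i < k"
  shows "0 \<le> orient (vtx k (gtm_step k eps b) 0) (vtx k (gtm_step k eps b) i) (vtx k (gtm_step k eps b) (i+1))"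
proof -
  let ?C = "vtx k (gtm_step k eps b)"
  have k0: "0 < k" using k3 by simp
  have Ck: "?C k = ?C 0" using vtx_add_k[of k _ 0] by simp
  consider "i = 0" | "i = k - 1" | "1 \<le> i" "i \<le> k - 2" using i by linarith
  then show ?thesis
  proof cases
    case 1 then show ?thesis by simp
  next
    case 2 then have "i + 1 = k" using k0 by simp
    then show ?thesis using Ck by simp
  next
    case 3
    show ?thesis
    proof (cases "k = 3")
      case True
      then have i1: "i = 1" using 3 by simp
      have B3: "vtx k b 3 = vtx k b 0" "vtx k b 4 = vtx k b 1" "vtx k b 5 = vtx k b 2" "vtx k b 6 = vtx k b 0"
        using True by (simp_all add: vtx_def)
      have "?C 0 = sm eps (vtx k b 2) (vtx k b 0) (vtx k b 1)"
        using C_sm[OF k0, of eps b 0] True B3 by simp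
      moreover have "?C 1 = sm eps (vtx k b 0) (vtx k b 1) (vtx k b 2)"
        using C_sm[OF k0, of eps b 1] True B3 by simp
      moreover have "?C 2 = sm eps (vtx k b 1) (vtx k b 2) (vtx k b 0)"
        using C_sm[OF k0, of eps b 2] True B3 by simp
      moreover have "0 \<le> orient (vtx k b 0) (vtx k b 1) (vtx k b 2)"
        using angS[OF conv k3, of 0 1 2] k3 by simp
      ultimately have "0 \<le> orient (?C 0) (?C 1) (?C 2)" by (simp add: L3)
      moreover have "i + 1 = 2" using i1 by simp
      ultimately show ?thesis using i1 by metis
    next
      case False
      then have k4: "4 \<le> k" using k3 by simp
      show ?thesis
      proof (cases "i = 1")
        case True
        then show ?thesis using C_loc[OF conv k4 e, of 0] by simp
      next
        case i1: False
        show ?thesis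
        proof (cases "i = k - 2")
          case True
          have "0 \<le> orient (?C (k-2)) (?C (k-2+1)) (?C (k-2+2))" by (rule C_loc[OF conv k4 e])
          moreover have "k - 2 + 2 = k" using k4 by simp
          ultimately have "0 \<le> orient (?C (k-2)) (?C (k-2+1)) (?C 0)" using Ck by simp
          then show ?thesis using True by (metis orient_cyc)
        next
          case False
          have "0 \<le> orient (?C i) (?C (i+1)) (?C 0)"
            by (rule C_far[OF conv k3 e]) (use 3 i1 False in auto)
          then show ?thesis by (metis orient_cyc)
        qed
      qed
    qed
  qed
qed

lemma quad_facts:
  fixes j :: nat
  assumes conv: "convex_ccw_polygon k b" and k3: "3 \<le> k" and e: "0 \<le> eps" "eps \<le> 1/2"
  defines "A \<equiv> vtx k b j" and "B \<equiv> vtx k b (j+1)"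
    and "C \<equiv> vtx k (gtm_step k eps b) (j+1)" and "D \<equiv> vtx k (gtm_step k eps b) j"
  defines "M \<equiv> (A + B) / 2"
  shows "0 \<le> orient M B C" "0 \<le> orient M C D" "0 \<le> orient M D A" "orient M A B = 0"
    "0 \<le> orient A B C" "0 \<le> orient A B D"
proof -
  have k0: "0 < k" using k3 by simp
  define x where "x m = vtx k b (j + k - 1 + m)" for m
  have x1: "A = x 1" unfolding A_def x_def using k0 vtx_add_k[of k b j] by simp
  have x2: "B = x 2" unfolding B_def x_def using k0 vtx_add_k[of k b "j+1"]
    by (simp add: add.commute add.left_commute)
  have cC: "C = sm eps (x 1) (x 2) (x 3)"
    unfolding C_def x_def using C_sm[OF k0, of eps b "j+1"] k0 by (simp add: add.commute add.left_commute)
  have cD: "D = sm eps (x 0) (x 1) (x 2)"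
    unfolding D_def x_def using C_sm[OF k0, of eps b j] k0 by (simp add: add.commute add.left_commute)
  have o: "0 \<le> orient (x p) (x q) (x r)" if "p \<le> q" "q \<le> r" "r \<le> 3" for p q r
    unfolding x_def using that k3 by (intro angS[OF conv k3]) auto
  note L = Lquad[OF e o[of 0 1 2] o[of 0 1 3] o[of 0 2 3] o[of 1 2 3]]
  show "0 \<le> orient M B C" "0 \<le> orient M C D" "0 \<le> orient M D A" "orient M A B = 0"
    "0 \<le> orient A B C" "0 \<le> orient A B D"
    using L unfolding M_def x1 x2 cC cD by simp_all
qed

definition lw :: "complex \<Rightarrow> complex \<Rightarrow> complex \<Rightarrow> complex" where
  "lw a b z = winding_number (linepath a b) z"

lemma lw_rev: "z \<notin> closed_segment a b \<Longrightarrow> lw b a z = - lw a b z"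
proof -
  assume z: "z \<notin> closed_segment a b"
  have "winding_number (reversepath (linepath a b)) z = - winding_number (linepath a b) z"
    by (rule winding_number_reversepath) (use z in auto)
  then show ?thesis by (simp add: lw_def)
qed

lemma wn_tri_lw:
  assumes "z \<notin> closed_segment a b" "z \<notin> closed_segment b c" "z \<notin> closed_segment c a"
  shows "winding_number (linepath a b +++ linepath b c +++ linepath c a) z = lw a b z + lw b c z + lw c a z"
  using assms by (simp add: lw_def winding_number_join path_image_join)

lemma wn_quad_lw:
  assumes "z \<notin> closed_segment a b" "z \<notin> closed_segment b c" "z \<notin> closed_segment c d"
    "z \<notin> closed_segment d a"
  shows "winding_number (quad_path a b c d) z = lw a b z + lw b c z + lw c d z + lw d a z"
  using assms by (simp add: quad_path_def lw_def winding_number_join path_image_join)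

lemma orient_hull:
  assumes "z \<in> convex hull {a, b, c}"
  shows "\<exists>u v w. 0 \<le> u \<and> 0 \<le> v \<and> 0 \<le> w \<and> u + v + w = 1 \<and> z = u *\<^sub>R a + v *\<^sub>R b + w *\<^sub>R c \<and>
     (\<forall>p q. orient p q z = u * orient p q a + v * orient p q b + w * orient p q c)"
proof -
  obtain u v w where uvw: "0 \<le> u" "0 \<le> v" "0 \<le> w" "u + v + w = 1"
    "z = u *\<^sub>R a + v *\<^sub>R b + w *\<^sub>R c"
    using assms unfolding convex_hull_3 by blast
  have "orient p q z = u * orient p q a + v * orient p q b + w * orient p q c" for p q
  proof -
    show ?thesis using uvw(4) unfolding uvw(5) orient_alt by (simp add: scaleR_conv_of_real; algebra)
  qed
  then show ?thesis using uvw by blast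
qed

lemma collinear_from_orient:
  assumes "orient a b c = 0" shows "collinear {a, b, c}"
proof (cases "a = b")
  case True then show ?thesis by (simp add: collinear_2)
next
  case False
  have "cross2 (a - b) (c - b) = 0" using assms by (simp add: orient_alt cross2_alt algebra_simps)
  then obtain t where t: "c - b = of_real t * (a - b)" using cross2_zero_mult[of "a - b"] False by auto
  have "collinear {0, a - b, c - b}"
    unfolding collinear_lemma using t by (auto simp: scaleR_conv_of_real)
  then show ?thesis using collinear_3[of a b c] by simp
qed

lemma degenerate_hull:
  assumes "orient a b c = 0"
  shows "convex hull {a, b, c} \<subseteq> closed_segment a b \<union> closed_segment b c \<union> closed_segment c a"
proof -
  have "collinear {a, b, c}" by (rule collinear_from_orient[OF assms])
  then consider "a \<in> closed_segment b c" | "b \<in> closed_segment c a" | "c \<in> closed_segment a b"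
    unfolding collinear_between_cases between_mem_segment by blast
  then show ?thesis
  proof cases
    case 1
    then have "a \<in> convex hull {b, c}" by (simp add: segment_convex_hull)
    then have "convex hull (insert a {b, c}) = convex hull {b, c}" by (rule hull_redundant)
    then show ?thesis by (auto simp: segment_convex_hull)
  next
    case 2
    then have "b \<in> convex hull {c, a}" by (simp add: segment_convex_hull)
    then have "convex hull (insert b {c, a}) = convex hull {c, a}" by (rule hull_redundant)
    moreover have "insert b {c, a} = {a, b, c}" by auto
    ultimately show ?thesis by (auto simp: segment_convex_hull)
  next
    case 3
    then have "c \<in> convex hull {a, b}" by (simp add: segment_convex_hull)
    then have "convex hull (insert c {a, b}) = convex hull {a, b}" by (rule hull_redundant)
    moreover have "insert c {a, b} = {a, b, c}" by auto
    ultimately show ?thesis by (auto simp: segment_convex_hull)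
  qed
qed

lemma tri_01:
  assumes o: "0 \<le> orient a b c"
    and z: "z \<notin> closed_segment a b" "z \<notin> closed_segment b c" "z \<notin> closed_segment c a"
  shows "lw a b z + lw b c z + lw c a z = 0 \<or>
         (lw a b z + lw b c z + lw c a z = 1 \<and> z \<in> convex hull {a, b, c} \<and> 0 < orient a b z)"
proof -
  let ?g = "linepath a b +++ linepath b c +++ linepath c a"
  have eq: "winding_number ?g z = lw a b z + lw b c z + lw c a z" by (rule wn_tri_lw[OF z])
  have "closed_segment a b \<subseteq> convex hull {a, b, c}" "closed_segment b c \<subseteq> convex hull {a, b, c}"
    "closed_segment c a \<subseteq> convex hull {a, b, c}"
    by (simp_all add: segment_convex_hull hull_mono)
  then have img: "path_image ?g \<subseteq> convex hull {a, b, c}"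
    by (simp add: path_image_join)
  show ?thesis
  proof (cases "z \<in> convex hull {a, b, c}")
    case False
    have "winding_number ?g z = 0"
      by (rule winding_number_zero_outside[OF _ convex_convex_hull _ False img]) auto
    then show ?thesis using eq by simp
  next
    case True
    have zi: "z \<in> interior (convex hull {a, b, c})"
      using True z by (simp add: interior_of_triangle)
    obtain u v w where uvw: "0 \<le> u" "0 \<le> v" "0 \<le> w" "u + v + w = 1" and zuvw: "z = u *\<^sub>R a + v *\<^sub>R b + w *\<^sub>R c"
      and ori: "\<And>p q. orient p q z = u * orient p q a + v * orient p q b + w * orient p q c"
      using orient_hull[OF True] by blast
    have oz: "orient a b z = w * orient a b c" using ori[of a b] by simp
    have pos: "0 < orient a b z"
    proof (rule ccontr)
      assume "\<not> 0 < orient a b z"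
      moreover have "0 \<le> w * orient a b c" using o uvw by simp
      ultimately have "w * orient a b c = 0" using oz by linarith
      then consider "w = 0" | "orient a b c = 0" by auto
      then show False
      proof cases
        case 1
        then have "z = (1 - v) *\<^sub>R a + v *\<^sub>R b" using zuvw uvw by simp
        moreover have "v \<le> 1" using uvw 1 by simp
        ultimately have "z \<in> closed_segment a b" using uvw unfolding closed_segment_def by blast
        then show False using z by simp
      next
        case 2
        then show False using degenerate_hull[OF 2] True z by blast
      qed
    qed
    have "Im ((b - a) * cnj (b - z)) = orient a b z"
      by (simp add: orient_alt algebra_simps)
    then have "winding_number ?g z = 1" using winding_number_triangle[OF zi] pos by simp
    then show ?thesis using eq True pos by simp
  qed
qed

lemma interior_finite_Union_empty:
  "finite F \<Longrightarrow> (\<forall>X\<in>F. closed X \<and> interior X = {}) \<Longrightarrow> interior (\<Union>F) = {}"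
proof (induction F rule: finite_induct)
  case empty then show ?case by simp
next
  case (insert X F)
  then have "interior (\<Union>F) = {}" "closed X" "interior X = {}" by auto
  then show ?case using interior_closed_Un_empty_interior[of X "\<Union>F"] by simp
qed

lemma generic_point:
  fixes P :: "complex set"
  assumes "finite P" "open U" "U \<noteq> {}"
  shows "\<exists>z\<in>U. \<forall>p\<in>P. \<forall>q\<in>P. z \<notin> closed_segment p q"
proof (rule ccontr)
  assume "\<not> ?thesis"
  then have sub: "U \<subseteq> \<Union>((\<lambda>(p, q). closed_segment p q) ` (P \<times> P))" by fastforce
  have "interior (\<Union>((\<lambda>(p, q). closed_segment p q) ` (P \<times> P))) = {}"
    by (rule interior_finite_Union_empty) (use assms(1) in \<open>auto simp: interior_closed_segment\<close>)
  moreover have "U \<subseteq> interior (\<Union>((\<lambda>(p, q). closed_segment p q) ` (P \<times> P)))"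
    by (rule interior_maximal[OF sub assms(2)])
  ultimately show False using assms(3) by simp
qed

lemma open_quad_interior: "open (quad_interior a b c d)"
proof -
  let ?g = "quad_path a b c d"
  have p: "path ?g" "pathfinish ?g = pathstart ?g" by (simp_all add: quad_path_def)
  have "quad_interior a b c d = (\<Union>n\<in>-{0}. {z. z \<notin> path_image ?g \<and> winding_number ?g z = n})"
    unfolding quad_interior_def by auto
  then show ?thesis using open_winding_number_levelsets[OF p] by (simp add: open_UN)
qed

lemma sum01_ge0:
  fixes f :: "nat \<Rightarrow> complex"
  assumes "\<And>i. i \<in> I \<Longrightarrow> f i = 0 \<or> f i = 1"
  shows "0 \<le> Re (sum f I)"
proof -
  have "Re (sum f I) = (\<Sum>i\<in>I. Re (f i))" by (simp add: Re_sum)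
  also have "\<dots> \<ge> 0" using assms by (intro sum_nonneg) fastforce
  finally show ?thesis .
qed

lemma sum01_le1:
  fixes f :: "nat \<Rightarrow> complex"
  assumes fin: "finite I" and f01: "\<And>i. i \<in> I \<Longrightarrow> f i = 0 \<or> f i = 1"
    and uniq: "\<And>i i'. i \<in> I \<Longrightarrow> i' \<in> I \<Longrightarrow> f i = 1 \<Longrightarrow> f i' = 1 \<Longrightarrow> i = i'"
  shows "Re (sum f I) \<le> 1"
proof (cases "\<exists>i\<in>I. f i = 1")
  case True
  then obtain i where i: "i \<in> I" "f i = 1" by blast
  have "sum f I = f i + sum f (I - {i})" using fin i by (simp add: sum.remove)
  moreover have "sum f (I - {i}) = 0"
    by (rule sum.neutral) (use f01 uniq i in blast)
  ultimately show ?thesis using i by simp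
next
  case False
  then have "sum f I = 0" using f01 by (intro sum.neutral) blast
  then show ?thesis by simp
qed

lemma four01:
  fixes x1 x2 x3 x4 :: complex
  assumes "x1 = 0 \<or> x1 = 1" "x2 = 0 \<or> x2 = 1" "x3 = 0 \<or> x3 = 1" "x4 = 0 \<or> x4 = 1"
  shows "0 \<le> Re (x1 + x2 + x3 + x4)" "x1 + x2 + x3 + x4 \<noteq> 0 \<Longrightarrow> 1 \<le> Re (x1 + x2 + x3 + x4)"
  using assms by auto

lemma disjoint_main:
  assumes conv: "convex_ccw_polygon k b" and k3: "3 \<le> k" and e: "0 \<le> eps" "eps \<le> 1/2"
    and jj: "j < k" "j' < k" "j \<noteq> j'"
  shows "wave_interior k eps b j \<inter> wave_interior k eps b j' = {}"
proof (rule ccontr)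
  assume ne: "wave_interior k eps b j \<inter> wave_interior k eps b j' \<noteq> {}"
  define B where "B = vtx k b"
  define C where "C = vtx k (gtm_step k eps b)"
  define M where "M i = (B i + B (i+1)) / 2" for i
  define P where "P = B ` {..<k} \<union> C ` {..<k} \<union> M ` {..<k}"
  have k0: "0 < k" using k3 by simp
  have Bmod: "B i = B (i mod k)" for i by (simp add: B_def vtx_def)
  have Cmod: "C i = C (i mod k)" for i by (simp add: C_def vtx_def)
  have Mmod: "M i = M (i mod k)" for i
  proof -
    have "B (i mod k + 1) = B (i + 1)" unfolding B_def by (rule vtx_mod_add)
    then show ?thesis unfolding M_def using Bmod[of i] by simp
  qed
  have BP: "B i \<in> P" for i using Bmod[of i] k0 unfolding P_def by auto
  have CP: "C i \<in> P" for i using Cmod[of i] k0 unfolding P_def by auto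
  have MP: "M i \<in> P" for i using Mmod[of i] k0 unfolding P_def by auto
  have finP: "finite P" unfolding P_def by simp
  have U: "open (wave_interior k eps b j \<inter> wave_interior k eps b j')"
    unfolding wave_interior_def by (intro open_Int open_quad_interior)
  obtain z where zU: "z \<in> wave_interior k eps b j \<inter> wave_interior k eps b j'"
    and gen: "\<forall>p\<in>P. \<forall>q\<in>P. z \<notin> closed_segment p q"
    using generic_point[OF finP U ne] by blast
  have g: "z \<notin> closed_segment x y" if "x \<in> P" "y \<in> P" for x y using gen that by blast
  define T where "T a b' c = lw a b' z + lw b' c z + lw c a z" for a b' c
  have T01: "T a b' c = 0 \<or> (T a b' c = 1 \<and> z \<in> convex hull {a, b', c} \<and> 0 < orient a b' z)"
    if "a \<in> P" "b' \<in> P" "c \<in> P" "0 \<le> orient a b' c" for a b' c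
    unfolding T_def by (rule tri_01) (use that g in auto)
  have T01': "T a b' c = 0 \<or> T a b' c = 1"
    if "a \<in> P" "b' \<in> P" "c \<in> P" "0 \<le> orient a b' c" for a b' c
    using T01[OF that] by blast
  define SQ where "SQ i = lw (B i) (B (i+1)) z + lw (B (i+1)) (C (i+1)) z + lw (C (i+1)) (C i) z + lw (C i) (B i) z" for i
  have SQ_nz: "SQ i \<noteq> 0" if "i = j \<or> i = j'" for i
  proof -
    have "z \<in> wave_interior k eps b i" using zU that by auto
    then have "winding_number (quad_path (B i) (B (i+1)) (C (i+1)) (C i)) z \<noteq> 0"
      by (simp add: wave_interior_def quad_interior_def B_def C_def)
    moreover have "winding_number (quad_path (B i) (B (i+1)) (C (i+1)) (C i)) z = SQ i"
      unfolding SQ_def by (rule wn_quad_lw) (rule g; simp add: BP CP)+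
    ultimately show ?thesis by simp
  qed
  have SQ_T: "SQ i = T (M i) (B i) (B (i+1)) + T (M i) (B (i+1)) (C (i+1)) + T (M i) (C (i+1)) (C i) + T (M i) (C i) (B i)" for i
  proof -
    have r: "lw x (M i) z = - lw (M i) x z" if "x \<in> P" for x
      using lw_rev[OF g[OF MP that]] by simp
    show ?thesis unfolding SQ_def T_def
      using r[OF BP[of i]] r[OF BP[of "i+1"]] r[OF CP[of "i+1"]] r[OF CP[of i]] by simp
  qed
  have SQ01: "0 \<le> Re (SQ i) \<and> (SQ i \<noteq> 0 \<longrightarrow> 1 \<le> Re (SQ i))" for i
  proof -
    note qf = quad_facts[OF conv k3 e, of i, folded B_def C_def]
    have Mi: "(B i + B (i + 1)) / 2 = M i" by (simp add: M_def)
    note qf' = qf[unfolded Mi]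
    have t1: "T (M i) (B i) (B (i+1)) = 0 \<or> T (M i) (B i) (B (i+1)) = 1"
      by (rule T01'[OF MP BP BP]) (use qf' in simp)
    have t2: "T (M i) (B (i+1)) (C (i+1)) = 0 \<or> T (M i) (B (i+1)) (C (i+1)) = 1"
      by (rule T01'[OF MP BP CP]) (use qf' in simp)
    have t3: "T (M i) (C (i+1)) (C i) = 0 \<or> T (M i) (C (i+1)) (C i) = 1"
      by (rule T01'[OF MP CP CP]) (use qf' in simp)
    have t4: "T (M i) (C i) (B i) = 0 \<or> T (M i) (C i) (B i) = 1"
      by (rule T01'[OF MP CP BP]) (use qf' in simp)
    show ?thesis unfolding SQ_T using four01[OF t1 t2 t3 t4] by blast
  qed
  define s where "s i = lw (B i) (C i) z" for i
  have SQ_alt: "SQ i = lw (B i) (B (i+1)) z - lw (C i) (C (i+1)) z + (s (Suc i) - s i)" for i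
    using lw_rev[OF g[OF CP[of i] CP[of "i+1"]]] lw_rev[OF g[OF BP[of i] CP[of i]]]
    unfolding SQ_def s_def by simp
  have sk: "s k = s 0" using Bmod[of k] Cmod[of k] by (simp add: s_def)
  have sumSQ: "(\<Sum>i<k. SQ i) = (\<Sum>i<k. lw (B i) (B (i+1)) z) - (\<Sum>i<k. lw (C i) (C (i+1)) z)"
  proof -
    have "(\<Sum>i<k. SQ i) = (\<Sum>i<k. lw (B i) (B (i+1)) z) - (\<Sum>i<k. lw (C i) (C (i+1)) z) + (\<Sum>i<k. s (Suc i) - s i)"
      unfolding SQ_alt by (simp add: sum.distrib sum_subtractf)
    moreover have "(\<Sum>i<k. s (Suc i) - s i) = 0" using sum_lessThan_telescope[of s k] sk by simp
    ultimately show ?thesis by simp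
  qed
  have fan: "(\<Sum>i<k. lw (X i) (X (i+1)) z) = (\<Sum>i<k. T (X 0) (X i) (X (i+1)))"
    if XP: "\<And>i. X i \<in> P" and Xk: "X k = X 0" for X
  proof -
    define h where "h i = lw (X 0) (X i) z" for i
    have "T (X 0) (X i) (X (i+1)) = lw (X i) (X (i+1)) z + (h i - h (Suc i))" for i
      using lw_rev[OF g[OF XP XP, of 0 "i+1"]] unfolding T_def h_def by simp
    then have "(\<Sum>i<k. T (X 0) (X i) (X (i+1))) = (\<Sum>i<k. lw (X i) (X (i+1)) z) + (\<Sum>i<k. h i - h (Suc i))"
      by (simp add: sum.distrib)
    moreover have "(\<Sum>i<k. h i - h (Suc i)) = 0" using sum_lessThan_telescope'[of h k] Xk by (simp add: h_def)
    ultimately show ?thesis by simp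
  qed
  have Bk: "B k = B 0" using Bmod[of k] by simp
  have Ck: "C k = C 0" using Cmod[of k] by simp
  have oB: "0 \<le> orient (B 0) (B m) (B n)" if "m \<le> n" "n \<le> k" for m n
    unfolding B_def using angS[OF conv k3, of 0 m n] that by simp
  have SP_le: "Re (\<Sum>i<k. T (B 0) (B i) (B (i+1))) \<le> 1"
  proof (rule sum01_le1)
    show "T (B 0) (B i) (B (i+1)) = 0 \<or> T (B 0) (B i) (B (i+1)) = 1" if "i \<in> {..<k}" for i
      by (rule T01'[OF BP BP BP]) (rule oB; use that in simp)
    have no2: False if "i < i'" "i' < k" "T (B 0) (B i) (B (i+1)) = 1" "T (B 0) (B i') (B (i'+1)) = 1" for i i'
    proof -
      have h1: "z \<in> convex hull {B 0, B i, B (i+1)}"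
        using T01[OF BP BP BP oB[of i "i+1"]] that by auto
      have h2: "0 < orient (B 0) (B i') z"
        using T01[OF BP BP BP oB[of i' "i'+1"]] that by auto
      obtain u v w where uvw: "0 \<le> u" "0 \<le> v" "0 \<le> w"
        and ori: "\<And>p q. orient p q z = u * orient p q (B 0) + v * orient p q (B i) + w * orient p q (B (i+1))"
        using orient_hull[OF h1] by blast
      have a1: "orient (B 0) (B i') (B i) \<le> 0"
        using oB[of i i'] that orient_swap[of "B 0" "B i'" "B i"] by simp
      have a2: "orient (B 0) (B i') (B (i+1)) \<le> 0"
        using oB[of "i+1" i'] that orient_swap[of "B 0" "B i'" "B (i+1)"] by simp
      have "orient (B 0) (B i') z \<le> 0"
        unfolding ori using uvw a1 a2 by (simp add: mult_nonneg_nonpos add_nonpos_nonpos)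
      then show False using h2 by simp
    qed
    show "i = i'" if "i \<in> {..<k}" "i' \<in> {..<k}" "T (B 0) (B i) (B (i+1)) = 1" "T (B 0) (B i') (B (i'+1)) = 1" for i i'
      using no2[of i i'] no2[of i' i] that by (metis lessThan_iff linorder_neqE_nat)
  qed simp
  have oC: "0 \<le> orient (C 0) (C i) (C (i+1))" if "i < k" for i
    unfolding C_def using C_fan[OF conv k3 e that] .
  have SPC_ge: "0 \<le> Re (\<Sum>i<k. T (C 0) (C i) (C (i+1)))"
    by (rule sum01_ge0) (rule T01'[OF CP CP CP oC]; simp)
  have lhs: "Re (\<Sum>i<k. SQ i) \<le> 1"
    using sumSQ fan[OF BP Bk] fan[OF CP Ck] SP_le SPC_ge by simp
  have "Re (SQ j) + Re (SQ j') = (\<Sum>i\<in>{j, j'}. Re (SQ i))" using jj by simp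
  also have "\<dots> \<le> (\<Sum>i<k. Re (SQ i))"
    by (rule sum_mono2) (use jj SQ01 in auto)
  also have "\<dots> = Re (\<Sum>i<k. SQ i)" by (simp add: Re_sum)
  finally have "Re (SQ j) + Re (SQ j') \<le> 1" using lhs by simp
  moreover have "1 \<le> Re (SQ j)" "1 \<le> Re (SQ j')" using SQ01 SQ_nz by auto
  ultimately show False by simp
qed

lemma coll_no_cross:
  assumes r0: "cross2 (q - p) (r - p) = 0" and s0: "cross2 (q - p) (s - p) = 0"
  shows "\<not> segments_cross p q r s"
proof
  assume "segments_cross p q r s"
  then obtain x where X: "closed_segment p q \<inter> closed_segment r s = {x}"
    "x \<in> open_segment p q" "x \<in> open_segment r s"
    unfolding segments_cross_def by blast
  from X(2) obtain t where pq: "p \<noteq> q" and t: "0 < t" "t < 1" and xt: "x = (1 - t) *\<^sub>R p + t *\<^sub>R q"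
    by (auto simp: in_segment)
  from X(3) obtain u where rs: "r \<noteq> s" and u: "0 < u" "u < 1" and xu: "x = (1 - u) *\<^sub>R r + u *\<^sub>R s"
    by (auto simp: in_segment)
  have qp: "q - p \<noteq> 0" using pq by simp
  obtain a where ra: "r - p = of_real a * (q - p)" using cross2_zero_mult[OF qp r0] by blast
  obtain c where sc: "s - p = of_real c * (q - p)" using cross2_zero_mult[OF qp s0] by blast
  define d where "d = c - a"
  have d: "d \<noteq> 0"
  proof
    assume "d = 0"
    then have "r - p = s - p" using ra sc by (simp add: d_def)
    then show False using rs by simp
  qed
  have rr: "r = p + of_real a * (q - p)" "s = p + of_real c * (q - p)" using ra sc by (simp_all add: algebra_simps)
  define ee where "ee = min (min t (1 - t)) (min u (1 - u) * \<bar>d\<bar>) / 2"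
  have ee: "0 < ee" using t u d by (simp add: ee_def)
  have m1: "min u (1 - u) * \<bar>d\<bar> \<le> u * \<bar>d\<bar>" by (intro mult_right_mono) auto
  have m2: "min u (1 - u) * \<bar>d\<bar> \<le> (1 - u) * \<bar>d\<bar>" by (intro mult_right_mono) auto
  have h1: "min (min t (1 - t)) (min u (1 - u) * \<bar>d\<bar>) \<le> min u (1 - u) * \<bar>d\<bar>" by (rule min.cobounded2)
  have h2: "min (min t (1 - t)) (min u (1 - u) * \<bar>d\<bar>) \<le> 1 - t" by simp
  have ee1a: "ee \<le> (1 - t) / 2" unfolding ee_def by (rule divide_right_mono[OF h2]) simp
  have ee1b: "ee \<le> u * \<bar>d\<bar> / 2" unfolding ee_def by (rule divide_right_mono[OF order.trans[OF h1 m1]]) simp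
  have ee1c: "ee \<le> (1 - u) * \<bar>d\<bar> / 2" unfolding ee_def by (rule divide_right_mono[OF order.trans[OF h1 m2]]) simp
  note ee1 = ee1a ee1b ee1c
  define y where "y = x + of_real ee * (q - p)"
  have "y \<in> closed_segment p q"
  proof -
    have "y = (1 - (t + ee)) *\<^sub>R p + (t + ee) *\<^sub>R q"
      unfolding y_def xt by (simp add: scaleR_conv_of_real algebra_simps)
    moreover have "0 \<le> t + ee" using t ee by linarith
    moreover have "t + ee \<le> 1" using t(2) ee1a by (argo | (simp add: field_simps) | smt)
    ultimately show ?thesis by (auto simp: in_segment)
  qed
  moreover have "y \<in> closed_segment r s"
  proof -
    define u' where "u' = u + ee / d"
    have "y = (1 - u') *\<^sub>R r + u' *\<^sub>R s"
    proof -
      have F1: "(1 - u') *\<^sub>R r + u' *\<^sub>R s = p + of_real (a + u' * d) * (q - p)"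
        unfolding rr by (simp add: scaleR_conv_of_real d_def algebra_simps)
      have F2: "a + u' * d = a + u * d + ee" using d by (simp add: u'_def field_simps)
      have F3: "x = p + of_real (a + u * d) * (q - p)"
        unfolding xu rr by (simp add: scaleR_conv_of_real d_def algebra_simps)
      have "(1 - u') *\<^sub>R r + u' *\<^sub>R s = p + of_real (a + u * d + ee) * (q - p)"
        using F1 F2 by simp
      also have "\<dots> = (p + of_real (a + u * d) * (q - p)) + of_real ee * (q - p)"
        by (simp add: algebra_simps)
      also have "\<dots> = y" using F3 by (simp add: y_def)
      finally show ?thesis by simp
    qed
    moreover have "\<bar>ee / d\<bar> \<le> min u (1 - u) / 2"
    proof -
      have "\<bar>ee / d\<bar> = ee / \<bar>d\<bar>" using ee by simp
      also have "\<dots> \<le> min u (1 - u) / 2"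
        using ee1 d by (simp add: divide_le_eq mult.commute)
      finally show ?thesis .
    qed
    then have wb: "\<bar>ee / d\<bar> \<le> u / 2" "\<bar>ee / d\<bar> \<le> (1 - u) / 2" by auto
    have wa: "- (ee / d) \<le> \<bar>ee / d\<bar>" "ee / d \<le> \<bar>ee / d\<bar>"
      by (rule abs_ge_minus_self, rule abs_ge_self)
    have "0 \<le> u'" unfolding u'_def using wb wa u by (argo | linarith | smt)
    moreover have "u' \<le> 1" unfolding u'_def using wb wa u by (argo | linarith | smt)
    ultimately show ?thesis by (auto simp: in_segment)
  qed
  ultimately have "y \<in> {x}" using X(1) by blast
  moreover have "y \<noteq> x" using ee qp by (simp add: y_def)
  ultimately show False by simp
qed

lemma orient_seg3:
  "orient p q ((1 - u) *\<^sub>R r + u *\<^sub>R s) = (1 - u) * orient p q r + u * orient p q s"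
  by (simp add: orient_alt scaleR_conv_of_real algebra_simps)

lemma one_side_no_cross:
  assumes "0 \<le> orient p q r" "0 \<le> orient p q s"
  shows "\<not> segments_cross p q r s"
proof
  assume sc: "segments_cross p q r s"
  then obtain x where X: "x \<in> open_segment p q" "x \<in> open_segment r s"
    unfolding segments_cross_def by blast
  from X(1) obtain t where xt: "x = (1 - t) *\<^sub>R p + t *\<^sub>R q" by (auto simp: in_segment)
  have "orient p q x = 0" unfolding xt by (simp add: orient_alt scaleR_conv_of_real algebra_simps)
  from X(2) obtain u where u: "0 < u" "u < 1" and xu: "x = (1 - u) *\<^sub>R r + u *\<^sub>R s"
    by (auto simp: in_segment)
  have "(1 - u) * orient p q r + u * orient p q s = 0"
    using \<open>orient p q x = 0\<close> unfolding xu orient_seg3 .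
  moreover have "0 \<le> (1 - u) * orient p q r" "0 \<le> u * orient p q s" using u assms by simp_all
  ultimately have "(1 - u) * orient p q r = 0" "u * orient p q s = 0" by linarith+
  then have "orient p q r = 0" "orient p q s = 0" using u by simp_all
  then show False using coll_no_cross[of q p r s] sc by (simp add: orient_def)
qed

lemma segments_cross_sym: "segments_cross p q r s \<longleftrightarrow> segments_cross r s p q"
  unfolding segments_cross_def by (auto simp: Int_commute)

lemma not_twisted:
  assumes conv: "convex_ccw_polygon k b" and k3: "3 \<le> k" and e: "0 \<le> eps" "eps \<le> 1/2"
  shows "\<not> wave_twisted k eps b j"
proof -
  define A where "A = vtx k b j"
  define B where "B = vtx k b (j+1)"
  define C where "C = vtx k (gtm_step k eps b) (j+1)"
  define D where "D = vtx k (gtm_step k eps b) j"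
  note qf = quad_facts[OF conv k3 e, of j, folded A_def B_def C_def D_def]
  have n1: "\<not> segments_cross A B C D" by (rule one_side_no_cross) (use qf in simp_all)
  have "orient ((A + B) / 2) C D = (orient A C D + orient B C D) / 2"
    by (simp add: orient_alt field_simps; algebra)
  then have sum: "0 \<le> orient A C D + orient B C D" using qf by simp
  have n2: "\<not> segments_cross B C D A"
  proof (cases "0 \<le> orient B C D")
    case True
    have "orient B C A = orient A B C" by (metis orient_cyc)
    then show ?thesis using True qf by (intro one_side_no_cross) simp_all
  next
    case False
    then have acd: "0 \<le> orient A C D" using sum by simp
    have "orient D A B = orient A B D" "orient D A C = orient A C D" by (metis orient_cyc)+
    then have "\<not> segments_cross D A B C" using acd qf by (intro one_side_no_cross) simp_all
    then show ?thesis using segments_cross_sym by blast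
  qed
  show ?thesis unfolding wave_twisted_def quad_twisted_def
    using n1 n2 by (simp add: A_def B_def C_def D_def)
qed

theorem mainTheorem7:
  fixes k :: nat and eps :: real and b :: "nat \<Rightarrow> complex"
  assumes "k \<ge> 3" and "0 \<le> eps" and "eps < 1/2"
    and "convex_ccw_polygon k b"
  shows "(\<forall>j<k. \<not> wave_twisted k eps b j) \<and>
         (\<forall>j<k. \<forall>j'<k. j \<noteq> j' \<longrightarrow> wave_interior k eps b j \<inter> wave_interior k eps b j' = {})"
  using not_twisted[OF assms(4) assms(1) assms(2)] disjoint_main[OF assms(4) assms(1) assms(2)] assms(3)
  by auto


end
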